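(* Let $\Sigma$ be a signature, $T$ a monad on sets carrying a continuous $\Sigma$-algebra structure, and $\Gamma$ a relator for the monad $T$ that is inductive and respects $\Sigma$. Then applicative $\Gamma$-similarity $\precsim_\Gamma$ is a precongruence (i.e. its open extension $\precsim_\Gamma^\circ$ is a compatible preorder), and it is sound for the $\Gamma$-contextual preorder: $\precsim_\Gamma^\circ\subseteq\ \leq_\Gamma$.
   Context: An $\omega$CPPO is a poset with least element $\bot$ in which every $\omega$-chain has a lub; continuous = monotone and preserving such lubs. $T$ (unit $\eta$, bind $u\texttt{>>=}f$) carries a continuous $\Sigma$-algebra structure if each $TX$ is an $\omega$CPPO, bind is continuous in both arguments, and each $\sigma\in\Sigma$ of arity $k$ is interpreted by a continuous $\sigma^T:(TX)^k\to TX$. A relator $\Gamma$ for $T$ assigns to each $R\subseteq X\times Y$ a relation $\Gamma R\subseteq TX\times TY$ with: $=_{TX}\subseteq\Gamma(=_X)$; $\Gamma S\circ\Gamma R\subseteq\Gamma(S\circ R)$; $\Gamma((f\times g)^{-1}R)=(Tf\times Tg)^{-1}\Gamma R$ where $(f\times g)^{-1}R=\{(z,w)\mid f(z)\,R\,g(w)\}$; monotone in $R$; $x\,R\,y\Rightarrow\eta(x)\,\Gamma R\,\eta(y)$; and if $x\,R\,y\Rightarrow f(x)\,\Gamma S\,g(y)$ for all $x,y$ then $u\,\Gamma R\,v\Rightarrow(u\texttt{>>=}f)\,\Gamma S\,(v\texttt{>>=}g)$. Inductive: for every $R$, $\bot\,\Gamma R\,v$ for all $v$, and for every $\omega$-chain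 $(u_n)$, $(\forall n.\ u_n\,\Gamma R\,v)\Rightarrow\bigsqcup_n u_n\,\Gamma R\,v$. Respects $\Sigma$: $u_i\,\Gamma R\,v_i$ for all $i$ implies $\sigma^T(\vec u)\,\Gamma R\,\sigma^T(\vec v)$. Terms/values: $M,N::=\mathsf{return}\,V\mid VW\mid(M\ \mathsf{to}\ x.N)\mid\sigma(M_1,\dots,M_{\alpha(\sigma)})$, $V,W::=x\mid\lambda x.M$, modulo $\alpha$-equivalence; $M[V/x]$ substitution; $\mathcal{T}_0,\mathcal{V}_0$ closed terms/values; $\mathcal{T}(\bar x),\mathcal{V}(\bar x)$ those with free variables in $\bar x$. For closed $M$: $M^{(0)}=\bot$, $(\mathsf{return}\,V)^{(n+1)}=\eta(V)$, $((\lambda x.M)V)^{(n+1)}=(M[V/x])^{(n)}$, $(M\ \mathsf{to}\ x.N)^{(n+1)}=M^{(n)}\texttt{>>=}(V\mapsto(N[V/x])^{(n)})$, $(\sigma(\vec M))^{(n+1)}=\sigma^T(M_1^{(n)},\dots)$; this is an $\omega$-chain and $[\![M]\!]=\bigsqcup_nM^{(n)}$. A closed relation $R=(R_{\mathcal{T}}\subseteq\mathcal{T}_0\times\mathcal{T}_0,R_{\mathcal{V}}\subseteq\mathcal{V}_0\times\mathcal{V}_0)$ is an applicative $\Gamma$-simulation if $M\,R_{\mathcal{T}}\,N\Rightarrow[\![M]\!]\,\Gamma R_{\mathcal{V}}\,[\![N]\!]$ and $V\,R_{\mathcal{V}}\,W\Rightarrow VU\,R_{\mathcal{T}}\,WU$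 for every closed value $U$; $\precsim_\Gamma$ is the largest one. The open extension $R^\circ$ of a closed relation: $\bar x\vdash M\,R^\circ\,N$ iff $M,N\in\mathcal{T}(\bar x)$ and $M[\bar V/\bar x]\,R_{\mathcal{T}}\,N[\bar V/\bar x]$ for all closed values $\bar V$ substituted for $\bar x$ (similarly for values). A $\lambda$-term relation is a pair $R=(R_{\mathcal{T}},R_{\mathcal{V}})$ of sets of triples $(\bar x,M,N)$ with $M,N\in\mathcal{T}(\bar x)$, resp. $(\bar x,V,W)$ with $V,W\in\mathcal{V}(\bar x)$, written $\bar x\vdash M\,R\,N$. It is compatible if: $\bar x\vdash x\,R_{\mathcal{V}}\,x$ for $x\in\bar x$; $\bar x\cup\{x\}\vdash M\,R_{\mathcal{T}}\,N$ ($x\notin\bar x$) implies $\bar x\vdash\lambda x.M\,R_{\mathcal{V}}\,\lambda x.N$; $\bar x\vdash V\,R_{\mathcal{V}}\,W$ implies $\bar x\vdash\mathsf{return}\,V\,R_{\mathcal{T}}\,\mathsf{return}\,W$; $\bar x\vdash V\,R_{\mathcal{V}}\,V'$, $\bar x\vdash W\,R_{\mathcal{V}}\,W'$ imply $\bar x\vdash VW\,R_{\mathcal{T}}\,V'W'$; $\bar x\vdash M\,R_{\mathcal{T}}\,M'$, $\bar x\cup\{x\}\vdash N\,R_{\mathcal{T}}\,N'$ ($x\notin\bar x$) imply $\bar x\vdash(M\ \mathsf{to}\ x.N)\,R_{\mathcal{T}}\,(M'\ \mathsf{to}\ x.N')$; $\bar x\vdash M_i\,R_{\mathcal{T}}\,N_i$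 for all $i$ implies $\bar x\vdash\sigma(\vec M)\,R_{\mathcal{T}}\,\sigma(\vec N)$. A precongruence is a compatible preorder (reflexive and transitive for each $\bar x$). Let $\mathcal{U}=\mathcal{V}_0\times\mathcal{V}_0$; $R$ is $\Gamma$-preadequate if for closed $M,N$, $\emptyset\vdash M\,R_{\mathcal{T}}\,N$ implies $[\![M]\!]\,\Gamma\mathcal{U}\,[\![N]\!]$. The $\Gamma$-contextual preorder $\leq_\Gamma$ is the union of all compatible $\Gamma$-preadequate $\lambda$-term relations. *)

theory Defs
  imports Main
begin

text \<open>The context \<open>x\<close>-bar of the paper is represented by a natural number n
  (the variables are the indices 0 .. n-1); extending the context by a
  fresh variable x (as under lambda and in the body of "to") is \<open>Suc n\<close>,
  the new variable being index 0.  's is the type of operation symbols of Sigma.\<close>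

datatype 's trm = Ret "'s vl" | App "'s vl" "'s vl" | To "'s trm" "'s trm"
  | Op 's "'s trm list"
and 's vl = Var nat | Lam "'s trm"

fun wft :: "('s \<Rightarrow> nat) \<Rightarrow> nat \<Rightarrow> 's trm \<Rightarrow> bool"
and wfv :: "('s \<Rightarrow> nat) \<Rightarrow> nat \<Rightarrow> 's vl \<Rightarrow> bool" where
  "wft ar n (Ret V) = wfv ar n V"
| "wft ar n (App V W) = (wfv ar n V \<and> wfv ar n W)"
| "wft ar n (To M N) = (wft ar n M \<and> wft ar (Suc n) N)"
| "wft ar n (Op s Ms) = (length Ms = ar s \<and> (\<forall>M\<in>set Ms. wft ar n M))"
| "wfv ar n (Var i) = (i < n)"
| "wfv ar n (Lam M) = wft ar (Suc n) M"

definition cvals :: "('s \<Rightarrow> nat) \<Rightarrow> 's vl set" where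
  "cvals ar = {V. wfv ar 0 V}"

text \<open>Substitution of closed values: under k binders, the free index i \<ge> k is
  replaced by \<open>s (i - k)\<close>.  Since only closed values are ever substituted,
  no shifting is needed.\<close>

fun instt :: "nat \<Rightarrow> (nat \<Rightarrow> 's vl) \<Rightarrow> 's trm \<Rightarrow> 's trm"
and instv :: "nat \<Rightarrow> (nat \<Rightarrow> 's vl) \<Rightarrow> 's vl \<Rightarrow> 's vl" where
  "instt k s (Ret V) = Ret (instv k s V)"
| "instt k s (App V W) = App (instv k s V) (instv k s W)"
| "instt k s (To M N) = To (instt k s M) (instt (Suc k) s N)"
| "instt k s (Op f Ms) = Op f (map (instt k s) Ms)"
| "instv k s (Var i) = (if i < k then Var i else s (i - k))"
| "instv k s (Lam M) = Lam (instt (Suc k) s M)"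

definition subst1 :: "'s vl \<Rightarrow> 's trm \<Rightarrow> 's trm" where
  "subst1 V M = instt 0 (\<lambda>_. V) M"

definition substs :: "'s vl list \<Rightarrow> 's trm \<Rightarrow> 's trm" where
  "substs vs M = instt 0 (\<lambda>i. vs ! i) M"
definition substsv :: "'s vl list \<Rightarrow> 's vl \<Rightarrow> 's vl" where
  "substsv vs V = instv 0 (\<lambda>i. vs ! i) V"

definition is_lub :: "('t \<Rightarrow> 't \<Rightarrow> bool) \<Rightarrow> 't set \<Rightarrow> 't \<Rightarrow> bool" where
  "is_lub le A x \<longleftrightarrow> (\<forall>y\<in>A. le y x) \<and> (\<forall>z. (\<forall>y\<in>A. le y z) \<longrightarrow> le x z)"

definition lub :: "('t \<Rightarrow> 't \<Rightarrow> bool) \<Rightarrow> 't set \<Rightarrow> 't" where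
  "lub le A = (THE x. is_lub le A x)"

definition ochain :: "('t \<Rightarrow> 't \<Rightarrow> bool) \<Rightarrow> (nat \<Rightarrow> 't) \<Rightarrow> bool" where
  "ochain le c \<longleftrightarrow> (\<forall>n. le (c n) (c (Suc n)))"

definition omega_cppo :: "('t \<Rightarrow> 't \<Rightarrow> bool) \<Rightarrow> 't \<Rightarrow> bool" where
  "omega_cppo le b \<longleftrightarrow>
     (\<forall>x. le x x) \<and> (\<forall>x y. le x y \<longrightarrow> le y x \<longrightarrow> x = y)
   \<and> (\<forall>x y z. le x y \<longrightarrow> le y z \<longrightarrow> le x z)
   \<and> (\<forall>x. le b x)
   \<and> (\<forall>c. ochain le c \<longrightarrow> (\<exists>x. is_lub le (range c) x))"

definition ocont :: "('t \<Rightarrow> 't \<Rightarrow> bool) \<Rightarrow> ('t \<Rightarrow> 't) \<Rightarrow> bool" where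
  "ocont le h \<longleftrightarrow> (\<forall>x y. le x y \<longrightarrow> le (h x) (h y))
     \<and> (\<forall>c. ochain le c \<longrightarrow> is_lub le (range (h \<circ> c)) (h (lub le (range c))))"

text \<open>The carrier type 't plays the role of \<open>T \<V>\<^sub>0\<close>.  Only the data of T at the
  set of closed values is used: unit, Kleisli bind for maps from closed values,
  the omega-CPPO structure and the interpretation of the operations.\<close>

record ('s, 't) effstr =
  ar  :: "'s \<Rightarrow> nat"
  le  :: "'t \<Rightarrow> 't \<Rightarrow> bool"
  bt  :: 't
  eta :: "'s vl \<Rightarrow> 't"
  bnd :: "'t \<Rightarrow> ('s vl \<Rightarrow> 't) \<Rightarrow> 't"
  opr :: "'s \<Rightarrow> 't list \<Rightarrow> 't"

definition monad_laws :: "('s, 't) effstr \<Rightarrow> bool" where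
  "monad_laws E \<longleftrightarrow>
     (\<forall>u f g. (\<forall>x\<in>cvals (ar E). f x = g x) \<longrightarrow> bnd E u f = bnd E u g)
   \<and> (\<forall>x f. x \<in> cvals (ar E) \<longrightarrow> bnd E (eta E x) f = f x)
   \<and> (\<forall>u. bnd E u (eta E) = u)
   \<and> (\<forall>u f g. bnd E (bnd E u f) g = bnd E u (\<lambda>x. bnd E (f x) g))"

definition continuous_sigma_algebra :: "('s, 't) effstr \<Rightarrow> bool" where
  "continuous_sigma_algebra E \<longleftrightarrow>
     omega_cppo (le E) (bt E)
   \<comment> \<open>bind continuous in its first argument\<close>
   \<and> (\<forall>f. ocont (le E) (\<lambda>u. bnd E u f))
   \<comment> \<open>bind continuous in its second argument (pointwise order on maps from closed values)\<close>
   \<and> (\<forall>u f g. (\<forall>x\<in>cvals (ar E). le E (f x) (g x)) \<longrightarrow> le E (bnd E u f) (bnd E u g))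
   \<and> (\<forall>u c. (\<forall>n. \<forall>x\<in>cvals (ar E). le E (c n x) (c (Suc n) x)) \<longrightarrow>
        is_lub (le E) (range (\<lambda>n. bnd E u (c n)))
          (bnd E u (\<lambda>x. lub (le E) (range (\<lambda>n. c n x)))))
   \<comment> \<open>each operation of arity k is continuous on the product (T V0)^k\<close>
   \<and> (\<forall>s us vs. length us = ar E s \<longrightarrow> length vs = ar E s \<longrightarrow> list_all2 (le E) us vs \<longrightarrow>
        le E (opr E s us) (opr E s vs))
   \<and> (\<forall>s c. (\<forall>n. length (c n) = ar E s \<and> list_all2 (le E) (c n) (c (Suc n))) \<longrightarrow>
        is_lub (le E) (range (\<lambda>n. opr E s (c n)))
          (opr E s (map (\<lambda>i. lub (le E) (range (\<lambda>n. c n ! i))) [0..<ar E s])))"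

definition Tmap :: "('s, 't) effstr \<Rightarrow> ('s vl \<Rightarrow> 's vl) \<Rightarrow> 't \<Rightarrow> 't" where
  "Tmap E f u = bnd E u (eta E \<circ> f)"

definition relator :: "('s, 't) effstr \<Rightarrow> (('s vl \<times> 's vl) set \<Rightarrow> ('t \<times> 't) set) \<Rightarrow> bool" where
  "relator E \<Gamma> \<longleftrightarrow> (let V0 = cvals (ar E) in
     Id \<subseteq> \<Gamma> (Id_on V0)
   \<and> (\<forall>R S. R \<subseteq> V0 \<times> V0 \<longrightarrow> S \<subseteq> V0 \<times> V0 \<longrightarrow> \<Gamma> R O \<Gamma> S \<subseteq> \<Gamma> (R O S))
   \<and> (\<forall>f g R. f ` V0 \<subseteq> V0 \<longrightarrow> g ` V0 \<subseteq> V0 \<longrightarrow> R \<subseteq> V0 \<times> V0 \<longrightarrow>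
        \<Gamma> {(z, w). z \<in> V0 \<and> w \<in> V0 \<and> (f z, g w) \<in> R}
          = {(u, v). (Tmap E f u, Tmap E g v) \<in> \<Gamma> R})
   \<and> (\<forall>R S. R \<subseteq> S \<longrightarrow> S \<subseteq> V0 \<times> V0 \<longrightarrow> \<Gamma> R \<subseteq> \<Gamma> S)
   \<and> (\<forall>R x y. R \<subseteq> V0 \<times> V0 \<longrightarrow> (x, y) \<in> R \<longrightarrow> (eta E x, eta E y) \<in> \<Gamma> R)
   \<and> (\<forall>R S f g u v. R \<subseteq> V0 \<times> V0 \<longrightarrow> S \<subseteq> V0 \<times> V0 \<longrightarrow>
        (\<forall>x y. (x, y) \<in> R \<longrightarrow> (f x, g y) \<in> \<Gamma> S) \<longrightarrow>
        (u, v) \<in> \<Gamma> R \<longrightarrow> (bnd E u f, bnd E v g) \<in> \<Gamma> S))"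

definition inductive_relator :: "('s, 't) effstr \<Rightarrow> (('s vl \<times> 's vl) set \<Rightarrow> ('t \<times> 't) set) \<Rightarrow> bool" where
  "inductive_relator E \<Gamma> \<longleftrightarrow> (\<forall>R. R \<subseteq> cvals (ar E) \<times> cvals (ar E) \<longrightarrow>
     (\<forall>v. (bt E, v) \<in> \<Gamma> R)
   \<and> (\<forall>u v. ochain (le E) u \<longrightarrow> (\<forall>n. (u n, v) \<in> \<Gamma> R) \<longrightarrow> (lub (le E) (range u), v) \<in> \<Gamma> R))"

definition respects_sigma :: "('s, 't) effstr \<Rightarrow> (('s vl \<times> 's vl) set \<Rightarrow> ('t \<times> 't) set) \<Rightarrow> bool" where
  "respects_sigma E \<Gamma> \<longleftrightarrow> (\<forall>R s us vs. R \<subseteq> cvals (ar E) \<times> cvals (ar E) \<longrightarrow>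
     length us = ar E s \<longrightarrow> length vs = ar E s \<longrightarrow>
     list_all2 (\<lambda>u v. (u, v) \<in> \<Gamma> R) us vs \<longrightarrow> (opr E s us, opr E s vs) \<in> \<Gamma> R)"

primrec approx :: "('s, 't) effstr \<Rightarrow> nat \<Rightarrow> 's trm \<Rightarrow> 't" where
  "approx E 0 M = bt E"
| "approx E (Suc n) M = (case M of
      Ret V \<Rightarrow> eta E V
    | App V W \<Rightarrow> (case V of Lam M' \<Rightarrow> approx E n (subst1 W M') | Var _ \<Rightarrow> bt E)
    | To M1 N \<Rightarrow> bnd E (approx E n M1) (\<lambda>V. approx E n (subst1 V N))
    | Op s Ms \<Rightarrow> opr E s (map (approx E n) Ms))"

definition sem :: "('s, 't) effstr \<Rightarrow> 's trm \<Rightarrow> 't" where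
  "sem E M = lub (le E) (range (\<lambda>n. approx E n M))"

definition app_sim :: "('s, 't) effstr \<Rightarrow> (('s vl \<times> 's vl) set \<Rightarrow> ('t \<times> 't) set)
    \<Rightarrow> ('s trm \<times> 's trm) set \<Rightarrow> ('s vl \<times> 's vl) set \<Rightarrow> bool" where
  "app_sim E \<Gamma> RT RV \<longleftrightarrow>
     RT \<subseteq> {M. wft (ar E) 0 M} \<times> {M. wft (ar E) 0 M}
   \<and> RV \<subseteq> cvals (ar E) \<times> cvals (ar E)
   \<and> (\<forall>M N. (M, N) \<in> RT \<longrightarrow> (sem E M, sem E N) \<in> \<Gamma> RV)
   \<and> (\<forall>V W U. (V, W) \<in> RV \<longrightarrow> U \<in> cvals (ar E) \<longrightarrow> (App V U, App W U) \<in> RT)"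

definition simT :: "('s, 't) effstr \<Rightarrow> (('s vl \<times> 's vl) set \<Rightarrow> ('t \<times> 't) set) \<Rightarrow> ('s trm \<times> 's trm) set" where
  "simT E \<Gamma> = \<Union>{RT. \<exists>RV. app_sim E \<Gamma> RT RV}"
definition simV :: "('s, 't) effstr \<Rightarrow> (('s vl \<times> 's vl) set \<Rightarrow> ('t \<times> 't) set) \<Rightarrow> ('s vl \<times> 's vl) set" where
  "simV E \<Gamma> = \<Union>{RV. \<exists>RT. app_sim E \<Gamma> RT RV}"

definition openT :: "('s \<Rightarrow> nat) \<Rightarrow> ('s trm \<times> 's trm) set \<Rightarrow> (nat \<times> 's trm \<times> 's trm) set" where
  "openT a RT = {(n, M, N). wft a n M \<and> wft a n N \<and>
     (\<forall>vs. length vs = n \<longrightarrow> (\<forall>V\<in>set vs. V \<in> cvals a) \<longrightarrow> (substs vs M, substs vs N) \<in> RT)}"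

definition openV :: "('s \<Rightarrow> nat) \<Rightarrow> ('s vl \<times> 's vl) set \<Rightarrow> (nat \<times> 's vl \<times> 's vl) set" where
  "openV a RV = {(n, V, W). wfv a n V \<and> wfv a n W \<and>
     (\<forall>vs. length vs = n \<longrightarrow> (\<forall>U\<in>set vs. U \<in> cvals a) \<longrightarrow> (substsv vs V, substsv vs W) \<in> RV)}"

definition lam_rel :: "('s \<Rightarrow> nat) \<Rightarrow> (nat \<times> 's trm \<times> 's trm) set \<Rightarrow> (nat \<times> 's vl \<times> 's vl) set \<Rightarrow> bool" where
  "lam_rel a RT RV \<longleftrightarrow> (\<forall>(n, M, N)\<in>RT. wft a n M \<and> wft a n N) \<and> (\<forall>(n, V, W)\<in>RV. wfv a n V \<and> wfv a n W)"

definition compatible :: "('s \<Rightarrow> nat) \<Rightarrow> (nat \<times> 's trm \<times> 's trm) set \<Rightarrow> (nat \<times> 's vl \<times> 's vl) set \<Rightarrow> bool" where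
  "compatible a RT RV \<longleftrightarrow>
     (\<forall>n i. i < n \<longrightarrow> (n, Var i, Var i) \<in> RV)
   \<and> (\<forall>n M N. (Suc n, M, N) \<in> RT \<longrightarrow> (n, Lam M, Lam N) \<in> RV)
   \<and> (\<forall>n V W. (n, V, W) \<in> RV \<longrightarrow> (n, Ret V, Ret W) \<in> RT)
   \<and> (\<forall>n V V' W W'. (n, V, V') \<in> RV \<longrightarrow> (n, W, W') \<in> RV \<longrightarrow> (n, App V W, App V' W') \<in> RT)
   \<and> (\<forall>n M M' N N'. (n, M, M') \<in> RT \<longrightarrow> (Suc n, N, N') \<in> RT \<longrightarrow> (n, To M N, To M' N') \<in> RT)
   \<and> (\<forall>n s Ms Ns. length Ms = a s \<longrightarrow> length Ns = a s \<longrightarrow>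
        (\<forall>i < a s. (n, Ms ! i, Ns ! i) \<in> RT) \<longrightarrow> (n, Op s Ms, Op s Ns) \<in> RT)"

definition preorder_rel :: "('s \<Rightarrow> nat) \<Rightarrow> (nat \<times> 's trm \<times> 's trm) set \<Rightarrow> (nat \<times> 's vl \<times> 's vl) set \<Rightarrow> bool" where
  "preorder_rel a RT RV \<longleftrightarrow>
     (\<forall>n M. wft a n M \<longrightarrow> (n, M, M) \<in> RT)
   \<and> (\<forall>n V. wfv a n V \<longrightarrow> (n, V, V) \<in> RV)
   \<and> (\<forall>n M N P. (n, M, N) \<in> RT \<longrightarrow> (n, N, P) \<in> RT \<longrightarrow> (n, M, P) \<in> RT)
   \<and> (\<forall>n V W U. (n, V, W) \<in> RV \<longrightarrow> (n, W, U) \<in> RV \<longrightarrow> (n, V, U) \<in> RV)"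

definition preadequate :: "('s, 't) effstr \<Rightarrow> (('s vl \<times> 's vl) set \<Rightarrow> ('t \<times> 't) set)
    \<Rightarrow> (nat \<times> 's trm \<times> 's trm) set \<Rightarrow> bool" where
  "preadequate E \<Gamma> RT \<longleftrightarrow> (\<forall>M N. (0, M, N) \<in> RT \<longrightarrow>
     (sem E M, sem E N) \<in> \<Gamma> (cvals (ar E) \<times> cvals (ar E)))"

definition ctxT :: "('s, 't) effstr \<Rightarrow> (('s vl \<times> 's vl) set \<Rightarrow> ('t \<times> 't) set) \<Rightarrow> (nat \<times> 's trm \<times> 's trm) set" where
  "ctxT E \<Gamma> = \<Union>{RT. \<exists>RV. lam_rel (ar E) RT RV \<and> compatible (ar E) RT RV \<and> preadequate E \<Gamma> RT}"
definition ctxV :: "('s, 't) effstr \<Rightarrow> (('s vl \<times> 's vl) set \<Rightarrow> ('t \<times> 't) set) \<Rightarrow> (nat \<times> 's vl \<times> 's vl) set" where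
  "ctxV E \<Gamma> = \<Union>{RV. \<exists>RT. lam_rel (ar E) RT RV \<and> compatible (ar E) RT RV \<and> preadequate E \<Gamma> RT}"

end

theory Submission
  imports Defs
begin

lemma wf_mono:
  "wft a m M \<Longrightarrow> m \<le> m' \<Longrightarrow> wft a m' M"
  "wfv a m V \<Longrightarrow> m \<le> m' \<Longrightarrow> wfv a m' V"
  by (induction M and V arbitrary: m m' and m m') auto

lemma inst_closed:
  "wft a m M \<Longrightarrow> m \<le> k \<Longrightarrow> instt k s M = M"
  "wfv a m V \<Longrightarrow> m \<le> k \<Longrightarrow> instv k s V = V"
proof (induction M and V arbitrary: m k and m k)
  case (Op x1 x2)
  then show ?case by (auto intro!: map_idI)
qed auto

lemma closed_inst: "wfv a 0 V \<Longrightarrow> instv k s V = V"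
  using inst_closed(2) by blast

lemma inst_agree:
  "wft a m M \<Longrightarrow> (\<forall>i. k \<le> i \<longrightarrow> i < m \<longrightarrow> s (i-k) = t (i-k)) \<Longrightarrow> instt k s M = instt k t M"
  "wfv a m V \<Longrightarrow> (\<forall>i. k \<le> i \<longrightarrow> i < m \<longrightarrow> s (i-k) = t (i-k)) \<Longrightarrow> instv k s V = instv k t V"
proof (induction M and V arbitrary: m k and m k)
  case (To M N)
  have "\<forall>i. Suc k \<le> i \<longrightarrow> i < Suc m \<longrightarrow> s (i - Suc k) = t (i - Suc k)"
    proof (intro allI impI)
    fix i assume "Suc k \<le> i" "i < Suc m"
    then show "s (i - Suc k) = t (i - Suc k)" using To.prems(2) by (cases i) auto
  qed
  then show ?case using To by auto
next
  case (Lam M)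
  have "\<forall>i. Suc k \<le> i \<longrightarrow> i < Suc m \<longrightarrow> s (i - Suc k) = t (i - Suc k)"
    proof (intro allI impI)
    fix i assume "Suc k \<le> i" "i < Suc m"
    then show "s (i - Suc k) = t (i - Suc k)" using Lam.prems(2) by (cases i) auto
  qed
  then show ?case using Lam by auto
qed auto

lemma inst_wf:
  "wft a (k+n) M \<Longrightarrow> (\<forall>i<n. wfv a 0 (s i)) \<Longrightarrow> wft a k (instt k s M)"
  "wfv a (k+n) V \<Longrightarrow> (\<forall>i<n. wfv a 0 (s i)) \<Longrightarrow> wfv a k (instv k s V)"
proof (induction M and V arbitrary: k and k)
  case (Var i)
  then show ?case using wf_mono(2)[of a 0 "s (i-k)" k] by auto
qed auto

lemma inst_comp:
  "(\<forall>i. wfv a 0 (t i)) \<Longrightarrow> instt j u (instt (j+k) t M) = instt j (\<lambda>i. if i<k then u i else t (i-k)) M"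
  "(\<forall>i. wfv a 0 (t i)) \<Longrightarrow> instv j u (instv (j+k) t V) = instv j (\<lambda>i. if i<k then u i else t (i-k)) V"
proof (induction M and V arbitrary: j and j)
  case (To M N)
  then show ?case using To.IH(2)[of "Suc j"] by simp
next
  case (Lam M)
  then show ?case using Lam.IH[of "Suc j"] by simp
next
  case (Var i)
  then show ?case using closed_inst[of a "t (i - (j+k))" j u] by (auto simp: diff_diff_add)
qed auto



lemma substs_wf: "wft a (length vs) M \<Longrightarrow> (\<forall>V\<in>set vs. wfv a 0 V) \<Longrightarrow> wft a 0 (substs vs M)"
  unfolding substs_def using inst_wf(1)[of a 0 "length vs" M "\<lambda>i. vs ! i"] by auto
lemma substsv_wf: "wfv a (length vs) V \<Longrightarrow> (\<forall>U\<in>set vs. wfv a 0 U) \<Longrightarrow> wfv a 0 (substsv vs V)"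
  unfolding substsv_def using inst_wf(2)[of a 0 "length vs" V "\<lambda>i. vs ! i"] by auto
lemma subst1_wf: "wfv a 0 V \<Longrightarrow> wft a (Suc 0) N \<Longrightarrow> wft a 0 (subst1 V N)"
  unfolding subst1_def using inst_wf(1)[of a 0 1 N "\<lambda>_. V"] by auto
lemma substs_closed: "wft a 0 M \<Longrightarrow> substs vs M = M"
  unfolding substs_def using inst_closed(1) by blast
lemma substsv_closed: "wfv a 0 V \<Longrightarrow> substsv vs V = V"
  unfolding substsv_def using inst_closed(2) by blast

locale howe =
  fixes E :: "('s, 't) effstr" and \<Gamma> :: "('s vl \<times> 's vl) set \<Rightarrow> ('t \<times> 't) set"
  assumes MLw: "monad_laws E" and CS: "continuous_sigma_algebra E"
    and RL: "relator E \<Gamma>" and IR: "inductive_relator E \<Gamma>" and RS: "respects_sigma E \<Gamma>"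
begin

abbreviation "V0 \<equiv> cvals (ar E)"
abbreviation "lee \<equiv> le E"

lemma cppo: "omega_cppo lee (bt E)" using CS unfolding continuous_sigma_algebra_def by blast
lemma le_refl: "lee x x" using cppo unfolding omega_cppo_def by blast
lemma le_trans: "lee x y \<Longrightarrow> lee y z \<Longrightarrow> lee x z" using cppo unfolding omega_cppo_def by blast
lemma le_antisym: "lee x y \<Longrightarrow> lee y x \<Longrightarrow> x = y" using cppo unfolding omega_cppo_def by blast
lemma le_bot: "lee (bt E) x" using cppo unfolding omega_cppo_def by blast
lemma lub_eq: "is_lub lee A x \<Longrightarrow> lub lee A = x"
  unfolding lub_def
  by (rule the_equality) (auto simp: is_lub_def intro: le_antisym)
lemma chain_lub: "ochain lee c \<Longrightarrow> is_lub lee (range c) (lub lee (range c))"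
proof -
  assume "ochain lee c"
  then obtain x where "is_lub lee (range c) x" using cppo unfolding omega_cppo_def by blast
  then show ?thesis using lub_eq by simp
qed

lemma bnd_mono1: "lee u v \<Longrightarrow> lee (bnd E u f) (bnd E v f)"
  using CS unfolding continuous_sigma_algebra_def ocont_def by blast
lemma bnd_cont1: "ochain lee c \<Longrightarrow> is_lub lee (range (\<lambda>n. bnd E (c n) f)) (bnd E (lub lee (range c)) f)"
  using CS unfolding continuous_sigma_algebra_def ocont_def by (simp add: comp_def)
lemma bnd_mono2: "(\<And>x. x \<in> V0 \<Longrightarrow> lee (f x) (g x)) \<Longrightarrow> lee (bnd E u f) (bnd E u g)"
  using CS unfolding continuous_sigma_algebra_def by blast
lemma bnd_cont2: "(\<And>n x. x \<in> V0 \<Longrightarrow> lee (c n x) (c (Suc n) x)) \<Longrightarrow>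
        is_lub lee (range (\<lambda>n. bnd E u (c n))) (bnd E u (\<lambda>x. lub lee (range (\<lambda>n. c n x))))"
  using CS unfolding continuous_sigma_algebra_def by blast
lemma opr_mono: "length us = ar E s \<Longrightarrow> length vs = ar E s \<Longrightarrow> list_all2 lee us vs \<Longrightarrow>
        lee (opr E s us) (opr E s vs)"
  using CS unfolding continuous_sigma_algebra_def by blast
lemma opr_cont: "(\<And>n. length (c n) = ar E s \<and> list_all2 lee (c n) (c (Suc n))) \<Longrightarrow>
        is_lub lee (range (\<lambda>n. opr E s (c n)))
          (opr E s (map (\<lambda>i. lub lee (range (\<lambda>n. c n ! i))) [0..<ar E s]))"
  using CS unfolding continuous_sigma_algebra_def by blast

lemma bnd_cong: "(\<And>x. x \<in> V0 \<Longrightarrow> f x = g x) \<Longrightarrow> bnd E u f = bnd E u g"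
  using MLw unfolding monad_laws_def by blast

lemma rel_parts: "Id \<subseteq> \<Gamma> (Id_on V0)
   \<and> (\<forall>R S. R \<subseteq> V0 \<times> V0 \<longrightarrow> S \<subseteq> V0 \<times> V0 \<longrightarrow> \<Gamma> R O \<Gamma> S \<subseteq> \<Gamma> (R O S))
   \<and> (\<forall>f g R. f ` V0 \<subseteq> V0 \<longrightarrow> g ` V0 \<subseteq> V0 \<longrightarrow> R \<subseteq> V0 \<times> V0 \<longrightarrow>
        \<Gamma> {(z, w). z \<in> V0 \<and> w \<in> V0 \<and> (f z, g w) \<in> R}
          = {(u, v). (Tmap E f u, Tmap E g v) \<in> \<Gamma> R})
   \<and> (\<forall>R S. R \<subseteq> S \<longrightarrow> S \<subseteq> V0 \<times> V0 \<longrightarrow> \<Gamma> R \<subseteq> \<Gamma> S)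
   \<and> (\<forall>R x y. R \<subseteq> V0 \<times> V0 \<longrightarrow> (x, y) \<in> R \<longrightarrow> (eta E x, eta E y) \<in> \<Gamma> R)
   \<and> (\<forall>R S f g u v. R \<subseteq> V0 \<times> V0 \<longrightarrow> S \<subseteq> V0 \<times> V0 \<longrightarrow>
        (\<forall>x y. (x, y) \<in> R \<longrightarrow> (f x, g y) \<in> \<Gamma> S) \<longrightarrow>
        (u, v) \<in> \<Gamma> R \<longrightarrow> (bnd E u f, bnd E v g) \<in> \<Gamma> S)"
  using RL unfolding relator_def Let_def by assumption
lemma rel_id: "(x, x) \<in> \<Gamma> (Id_on V0)"
  using conjunct1[OF rel_parts] by blast
lemma rel_comp: "R \<subseteq> V0 \<times> V0 \<Longrightarrow> S \<subseteq> V0 \<times> V0 \<Longrightarrow> (x, y) \<in> \<Gamma> R \<Longrightarrow> (y, z) \<in> \<Gamma> S \<Longrightarrow> (x, z) \<in> \<Gamma> (R O S)"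
  using conjunct1[OF conjunct2[OF rel_parts]] by blast
lemma rel_mono: "R \<subseteq> S \<Longrightarrow> S \<subseteq> V0 \<times> V0 \<Longrightarrow> (x, y) \<in> \<Gamma> R \<Longrightarrow> (x, y) \<in> \<Gamma> S"
  using conjunct1[OF conjunct2[OF conjunct2[OF conjunct2[OF rel_parts]]]] by blast
lemma rel_eta: "R \<subseteq> V0 \<times> V0 \<Longrightarrow> (x, y) \<in> R \<Longrightarrow> (eta E x, eta E y) \<in> \<Gamma> R"
  using conjunct1[OF conjunct2[OF conjunct2[OF conjunct2[OF conjunct2[OF rel_parts]]]]] by blast
lemma rel_bind: "R \<subseteq> V0 \<times> V0 \<Longrightarrow> S \<subseteq> V0 \<times> V0 \<Longrightarrow> (\<And>x y. (x, y) \<in> R \<Longrightarrow> (f x, g y) \<in> \<Gamma> S) \<Longrightarrow>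
    (u, v) \<in> \<Gamma> R \<Longrightarrow> (bnd E u f, bnd E v g) \<in> \<Gamma> S"
proof -
  assume a: "R \<subseteq> V0 \<times> V0" "S \<subseteq> V0 \<times> V0" "\<And>x y. (x, y) \<in> R \<Longrightarrow> (f x, g y) \<in> \<Gamma> S" "(u, v) \<in> \<Gamma> R"
  have h: "\<forall>R S f g u v. R \<subseteq> V0 \<times> V0 \<longrightarrow> S \<subseteq> V0 \<times> V0 \<longrightarrow>
        (\<forall>x y. (x, y) \<in> R \<longrightarrow> (f x, g y) \<in> \<Gamma> S) \<longrightarrow>
        (u, v) \<in> \<Gamma> R \<longrightarrow> (bnd E u f, bnd E v g) \<in> \<Gamma> S"
    by (rule conjunct2[OF conjunct2[OF conjunct2[OF conjunct2[OF conjunct2[OF rel_parts]]]]])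
  show ?thesis by (rule h[rule_format, OF a(1,2) _ a(4)]) (use a(3) in blast)
qed
lemma ind_bot: "R \<subseteq> V0 \<times> V0 \<Longrightarrow> (bt E, v) \<in> \<Gamma> R"
  using IR unfolding inductive_relator_def by blast
lemma ind_lub: "R \<subseteq> V0 \<times> V0 \<Longrightarrow> ochain lee u \<Longrightarrow> (\<And>n. (u n, v) \<in> \<Gamma> R) \<Longrightarrow> (lub lee (range u), v) \<in> \<Gamma> R"
  using IR unfolding inductive_relator_def by blast
lemma rs: "R \<subseteq> V0 \<times> V0 \<Longrightarrow> length us = ar E s \<Longrightarrow> length vs = ar E s \<Longrightarrow>
     list_all2 (\<lambda>u v. (u, v) \<in> \<Gamma> R) us vs \<Longrightarrow> (opr E s us, opr E s vs) \<in> \<Gamma> R"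
  using RS unfolding respects_sigma_def by blast

abbreviation "wfc M \<equiv> wft (ar E) 0 M"

lemma approx_step: "wfc M \<Longrightarrow> lee (approx E n M) (approx E (Suc n) M)"
proof (induction n arbitrary: M)
  case 0
  then show ?case by (simp add: le_bot)
next
  case (Suc n)
  show ?case
  proof (cases M)
    case (Ret V)
    then show ?thesis by (simp add: le_refl)
  next
    case (App V W)
    then show ?thesis
    proof (cases V)
      case (Var x1)
      then show ?thesis using App by (simp add: le_refl)
    next
      case (Lam M')
      then show ?thesis using App Suc by (simp add: subst1_wf)
    qed
  next
    case (To M1 N1)
    have a: "lee (bnd E (approx E n M1) (\<lambda>V. approx E n (subst1 V N1)))
                 (bnd E (approx E (Suc n) M1) (\<lambda>V. approx E n (subst1 V N1)))"
      using Suc To by (intro bnd_mono1) simp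
    have b: "lee (bnd E (approx E (Suc n) M1) (\<lambda>V. approx E n (subst1 V N1)))
                 (bnd E (approx E (Suc n) M1) (\<lambda>V. approx E (Suc n) (subst1 V N1)))"
      using Suc To by (intro bnd_mono2) (simp add: subst1_wf cvals_def)
    show ?thesis using To le_trans[OF a b] by simp
  next
    case (Op s Ms)
    have "list_all2 lee (map (approx E n) Ms) (map (approx E (Suc n)) Ms)"
      using Suc Op by (auto simp: list_all2_map1 list_all2_map2 list_all2_same)
    then show ?thesis using Op Suc.prems by (simp add: opr_mono)
  qed
qed

lemma approx_chain: "wfc M \<Longrightarrow> ochain lee (\<lambda>n. approx E n M)"
  unfolding ochain_def using approx_step by blast

lemma approx_mono: "wfc M \<Longrightarrow> n \<le> m \<Longrightarrow> lee (approx E n M) (approx E m M)"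
proof (induction m)
  case 0 then show ?case by (simp add: le_refl)
next
  case (Suc m)
  then show ?case using approx_step le_trans le_refl by (metis le_Suc_eq)
qed

lemma approx_le_sem: "wfc M \<Longrightarrow> lee (approx E n M) (sem E M)"
  using chain_lub[OF approx_chain] unfolding sem_def is_lub_def by blast

lemma lub_shift: "c 0 = bt E \<Longrightarrow> lub lee (range c) = lub lee (range (\<lambda>n. c (Suc n)))"
proof -
  assume c0: "c 0 = bt E"
  have "is_lub lee (range c) = is_lub lee (range (\<lambda>n. c (Suc n)))"
  proof
    fix x
    have ub: "(\<forall>y\<in>range c. lee y z) = (\<forall>y\<in>range (\<lambda>n. c (Suc n)). lee y z)" for z
    proof
      assume h: "\<forall>y\<in>range c. lee y z"
      show "\<forall>y\<in>range (\<lambda>n. c (Suc n)). lee y z" using h by auto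
    next
      assume h: "\<forall>y\<in>range (\<lambda>n. c (Suc n)). lee y z"
      have "lee (c n) z" for n using h c0 le_bot by (cases n) auto
      then show "\<forall>y\<in>range c. lee y z" by auto
    qed
    show "is_lub lee (range c) x = is_lub lee (range (\<lambda>n. c (Suc n))) x"
      unfolding is_lub_def using ub by simp
  qed
  then show ?thesis unfolding lub_def by simp
qed

lemma sem_shift: "sem E M = lub lee (range (\<lambda>n. approx E (Suc n) M))"
  unfolding sem_def by (rule lub_shift) simp

lemma sem_Ret: "sem E (Ret V) = eta E V"
  unfolding sem_shift by (rule lub_eq) (auto simp: is_lub_def le_refl)

lemma sem_App: "sem E (App (Lam M) U) = sem E (subst1 U M)"
proof -
  have "sem E (App (Lam M) U) = lub lee (range (\<lambda>n. approx E (Suc n) (App (Lam M) U)))"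
    by (rule sem_shift)
  then show ?thesis by (simp add: sem_def)
qed

lemma sem_Op: "length Ms = ar E s \<Longrightarrow> \<forall>M\<in>set Ms. wfc M \<Longrightarrow> sem E (Op s Ms) = opr E s (map (sem E) Ms)"
proof -
  assume l: "length Ms = ar E s" and w: "\<forall>M\<in>set Ms. wfc M"
  have "is_lub lee (range (\<lambda>n. opr E s (map (approx E n) Ms)))
          (opr E s (map (\<lambda>i. lub lee (range (\<lambda>n. map (approx E n) Ms ! i))) [0..<ar E s]))"
    by (rule opr_cont) (use l w approx_step in \<open>auto simp: list_all2_map1 list_all2_map2 list_all2_same\<close>)
  moreover have "map (\<lambda>i. lub lee (range (\<lambda>n. map (approx E n) Ms ! i))) [0..<ar E s] = map (sem E) Ms"
    using l by (auto simp: sem_def intro!: nth_equalityI)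
  ultimately show ?thesis unfolding sem_shift by (simp add: lub_eq)
qed

lemma sem_To: "wfc M \<Longrightarrow> wft (ar E) (Suc 0) N \<Longrightarrow>
   sem E (To M N) = bnd E (sem E M) (\<lambda>V. sem E (subst1 V N))"
proof -
  assume wM: "wfc M" and wN: "wft (ar E) (Suc 0) N"
  define a where "a n = approx E n M" for n
  define f where "f n V = approx E n (subst1 V N)" for n V
  define F where "F V = sem E (subst1 V N)" for V
  have F: "F = (\<lambda>x. lub lee (range (\<lambda>n. f n x)))" unfolding F_def f_def sem_def by simp
  have wS: "V \<in> V0 \<Longrightarrow> wfc (subst1 V N)" for V using wN by (simp add: subst1_wf cvals_def)
  have "is_lub lee (range (\<lambda>n. bnd E (a n) (f n))) (bnd E (sem E M) F)"
    unfolding is_lub_def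
  proof safe
    fix n
    have "lee (bnd E (a n) (f n)) (bnd E (sem E M) (f n))"
      unfolding a_def using wM by (intro bnd_mono1 approx_le_sem)
    moreover have "lee (bnd E (sem E M) (f n)) (bnd E (sem E M) F)"
      unfolding f_def F_def by (intro bnd_mono2 approx_le_sem wS)
    ultimately show "lee (bnd E (a n) (f n)) (bnd E (sem E M) F)" by (rule le_trans)
  next
    fix z assume ub: "\<forall>y\<in>range (\<lambda>n. bnd E (a n) (f n)). lee y z"
    have m: "lee (bnd E (sem E M) (f m)) z" for m
    proof -
      have "is_lub lee (range (\<lambda>n. bnd E (a n) (f m))) (bnd E (sem E M) (f m))"
        unfolding a_def sem_def using approx_chain[OF wM] by (rule bnd_cont1)
      moreover have "lee (bnd E (a n) (f m)) z" for n
      proof -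
        have "lee (bnd E (a n) (f m)) (bnd E (a (max n m)) (f m))"
          unfolding a_def using wM by (intro bnd_mono1 approx_mono) (auto simp: max_def)
        moreover have "lee (bnd E (a (max n m)) (f m)) (bnd E (a (max n m)) (f (max n m)))"
          unfolding f_def by (intro bnd_mono2 approx_mono wS) (auto simp: max_def)
        ultimately show ?thesis using ub le_trans by blast
      qed
      ultimately show ?thesis unfolding is_lub_def by blast
    qed
    have "is_lub lee (range (\<lambda>n. bnd E (sem E M) (f n))) (bnd E (sem E M) F)"
      unfolding F f_def by (rule bnd_cont2) (use approx_step wS in blast)
    then show "lee (bnd E (sem E M) F) z" unfolding is_lub_def using m by blast
  qed
  then show ?thesis unfolding sem_shift a_def f_def F_def by (simp add: lub_eq)
qed

end


lemma openT_iff: "(n, M, N) \<in> openT a R \<longleftrightarrow> wft a n M \<and> wft a n N \<and>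
     (\<forall>vs. length vs = n \<longrightarrow> (\<forall>V\<in>set vs. V \<in> cvals a) \<longrightarrow> (substs vs M, substs vs N) \<in> R)"
  by (simp add: openT_def)
lemma openV_iff: "(n, V, W) \<in> openV a R \<longleftrightarrow> wfv a n V \<and> wfv a n W \<and>
     (\<forall>vs. length vs = n \<longrightarrow> (\<forall>U\<in>set vs. U \<in> cvals a) \<longrightarrow> (substsv vs V, substsv vs W) \<in> R)"
  by (simp add: openV_def)

context howe begin

abbreviation "sT \<equiv> simT E \<Gamma>"
abbreviation "sV \<equiv> simV E \<Gamma>"
abbreviation "OT \<equiv> openT (ar E) sT"
abbreviation "OV \<equiv> openV (ar E) sV"

lemma sim_le: "app_sim E \<Gamma> RT RV \<Longrightarrow> RT \<subseteq> sT \<and> RV \<subseteq> sV"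
  unfolding simT_def simV_def by blast

lemma sV_sub: "sV \<subseteq> V0 \<times> V0"
  unfolding simV_def app_sim_def by blast
lemma sT_sub: "sT \<subseteq> {M. wfc M} \<times> {M. wfc M}"
  unfolding simT_def app_sim_def by blast

lemma sT_sem: "(M, N) \<in> sT \<Longrightarrow> (sem E M, sem E N) \<in> \<Gamma> sV"
proof -
  assume "(M, N) \<in> sT"
  then obtain RT RV where s: "app_sim E \<Gamma> RT RV" and m: "(M, N) \<in> RT" unfolding simT_def by blast
  have "(sem E M, sem E N) \<in> \<Gamma> RV" using s m unfolding app_sim_def by blast
  moreover have "RV \<subseteq> sV" using sim_le[OF s] by blast
  ultimately show ?thesis using rel_mono sV_sub by blast
qed

lemma sV_app: "(V, W) \<in> sV \<Longrightarrow> U \<in> V0 \<Longrightarrow> (App V U, App W U) \<in> sT"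
proof -
  assume "(V, W) \<in> sV" "U \<in> V0"
  then obtain RT RV where s: "app_sim E \<Gamma> RT RV" and m: "(V, W) \<in> RV" unfolding simV_def by blast
  have "(App V U, App W U) \<in> RT" using s m \<open>U \<in> V0\<close> unfolding app_sim_def by blast
  then show ?thesis using sim_le[OF s] by blast
qed

lemma refl_sim: "app_sim E \<Gamma> {(M, M) | M. wfc M} (Id_on V0)"
  unfolding app_sim_def using rel_id by (auto simp: cvals_def)

lemma sT_refl: "wfc M \<Longrightarrow> (M, M) \<in> sT" using sim_le[OF refl_sim] by blast
lemma sV_refl: "V \<in> V0 \<Longrightarrow> (V, V) \<in> sV" using sim_le[OF refl_sim] by blast

lemma trans_sim: "app_sim E \<Gamma> (sT O sT) (sV O sV)"
  unfolding app_sim_def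
proof (intro conjI allI impI)
  show "sT O sT \<subseteq> {M. wfc M} \<times> {M. wfc M}" using sT_sub by blast
  show "sV O sV \<subseteq> V0 \<times> V0" using sV_sub by blast
next
  fix M N assume "(M, N) \<in> sT O sT"
  then obtain P where "(M, P) \<in> sT" "(P, N) \<in> sT" by blast
  then show "(sem E M, sem E N) \<in> \<Gamma> (sV O sV)" using rel_comp[OF sV_sub sV_sub] sT_sem by blast
next
  fix V W U assume "(V, W) \<in> sV O sV" "U \<in> V0"
  then obtain X where "(V, X) \<in> sV" "(X, W) \<in> sV" by blast
  then show "(App V U, App W U) \<in> sT O sT" using sV_app \<open>U \<in> V0\<close> by blast
qed

lemma sT_trans: "(M, N) \<in> sT \<Longrightarrow> (N, P) \<in> sT \<Longrightarrow> (M, P) \<in> sT" using sim_le[OF trans_sim] by blast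
lemma sV_trans: "(M, N) \<in> sV \<Longrightarrow> (N, P) \<in> sV \<Longrightarrow> (M, P) \<in> sV" using sim_le[OF trans_sim] by blast

lemma OT_wf: "(n, M, N) \<in> OT \<Longrightarrow> wft (ar E) n M \<and> wft (ar E) n N" by (simp add: openT_iff)
lemma OV_wf: "(n, M, N) \<in> OV \<Longrightarrow> wfv (ar E) n M \<and> wfv (ar E) n N" by (simp add: openV_iff)

lemma OT_refl: "wft (ar E) n M \<Longrightarrow> (n, M, M) \<in> OT"
  unfolding openT_iff by (auto intro!: sT_refl substs_wf simp: cvals_def)
lemma OV_refl: "wfv (ar E) n M \<Longrightarrow> (n, M, M) \<in> OV"
  unfolding openV_iff by (auto intro!: sV_refl substsv_wf simp: cvals_def)
lemma OT_trans: "(n, M, N) \<in> OT \<Longrightarrow> (n, N, P) \<in> OT \<Longrightarrow> (n, M, P) \<in> OT"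
  unfolding openT_iff
proof (elim conjE, intro conjI allI impI)
  fix vs :: "'s vl list"
  assume h1: "\<forall>vs. length vs = n \<longrightarrow> (\<forall>V\<in>set vs. V \<in> V0) \<longrightarrow> (substs vs M, substs vs N) \<in> sT"
    and h2: "\<forall>vs. length vs = n \<longrightarrow> (\<forall>V\<in>set vs. V \<in> V0) \<longrightarrow> (substs vs N, substs vs P) \<in> sT"
    and l: "length vs = n" "\<forall>V\<in>set vs. V \<in> V0"
  have a: "(substs vs M, substs vs N) \<in> sT" using h1 l by simp
  have b: "(substs vs N, substs vs P) \<in> sT" using h2 l by simp
  show "(substs vs M, substs vs P) \<in> sT" by (rule sT_trans[OF a b])
qed
lemma OV_trans: "(n, M, N) \<in> OV \<Longrightarrow> (n, N, P) \<in> OV \<Longrightarrow> (n, M, P) \<in> OV"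
  unfolding openV_iff
proof (elim conjE, intro conjI allI impI)
  fix vs :: "'s vl list"
  assume h1: "\<forall>vs. length vs = n \<longrightarrow> (\<forall>V\<in>set vs. V \<in> V0) \<longrightarrow> (substsv vs M, substsv vs N) \<in> sV"
    and h2: "\<forall>vs. length vs = n \<longrightarrow> (\<forall>V\<in>set vs. V \<in> V0) \<longrightarrow> (substsv vs N, substsv vs P) \<in> sV"
    and l: "length vs = n" "\<forall>V\<in>set vs. V \<in> V0"
  have a: "(substsv vs M, substsv vs N) \<in> sV" using h1 l by simp
  have b: "(substsv vs N, substsv vs P) \<in> sV" using h2 l by simp
  show "(substsv vs M, substsv vs P) \<in> sV" by (rule sV_trans[OF a b])
qed

lemma OT0: "(0, M, N) \<in> OT \<Longrightarrow> (M, N) \<in> sT"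
proof -
  assume "(0, M, N) \<in> OT"
  then have "wfc M" "wfc N" "(substs [] M, substs [] N) \<in> sT" unfolding openT_iff by auto
  then show ?thesis using substs_closed by metis
qed
lemma OV0: "(0, M, N) \<in> OV \<Longrightarrow> (M, N) \<in> sV"
proof -
  assume "(0, M, N) \<in> OV"
  then have "wfv (ar E) 0 M" "wfv (ar E) 0 N" "(substsv [] M, substsv [] N) \<in> sV" unfolding openV_iff by auto
  then show ?thesis using substsv_closed by metis
qed
lemma sV_OV0: "(M, N) \<in> sV \<Longrightarrow> (0, M, N) \<in> OV"
proof -
  assume a: "(M, N) \<in> sV"
  then have "wfv (ar E) 0 M" "wfv (ar E) 0 N" using sV_sub by (auto simp: cvals_def)
  then show ?thesis unfolding openV_iff using a substsv_closed[of "ar E" M] substsv_closed[of "ar E" N] by auto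
qed

lemma take_agree: "wft (ar E) n M \<Longrightarrow> n \<le> length vs \<Longrightarrow> substs vs M = substs (take n vs) M"
  unfolding substs_def by (rule inst_agree(1)) auto
lemma take_agreev: "wfv (ar E) n M \<Longrightarrow> n \<le> length vs \<Longrightarrow> substsv vs M = substsv (take n vs) M"
  unfolding substsv_def by (rule inst_agree(2)) auto

lemma OT_weak: "(n, M, N) \<in> OT \<Longrightarrow> n \<le> m \<Longrightarrow> (m, M, N) \<in> OT"
  unfolding openT_iff
proof (intro conjI allI impI)
  assume a: "wft (ar E) n M \<and> wft (ar E) n N \<and>
    (\<forall>vs. length vs = n \<longrightarrow> (\<forall>V\<in>set vs. V \<in> V0) \<longrightarrow> (substs vs M, substs vs N) \<in> sT)" "n \<le> m"
  then show "wft (ar E) m M" "wft (ar E) m N" using wf_mono by blast+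
  fix vs :: "'s vl list" assume "length vs = m" "\<forall>V\<in>set vs. V \<in> V0"
  moreover then have "\<forall>V\<in>set (take n vs). V \<in> V0" by (meson in_set_takeD)
  ultimately show "(substs vs M, substs vs N) \<in> sT"
    using a take_agree[of n M vs] take_agree[of n N vs] by auto
qed

lemma OV_weak: "(n, M, N) \<in> OV \<Longrightarrow> n \<le> m \<Longrightarrow> (m, M, N) \<in> OV"
  unfolding openV_iff
proof (intro conjI allI impI)
  assume a: "wfv (ar E) n M \<and> wfv (ar E) n N \<and>
    (\<forall>vs. length vs = n \<longrightarrow> (\<forall>V\<in>set vs. V \<in> V0) \<longrightarrow> (substsv vs M, substsv vs N) \<in> sV)" "n \<le> m"
  then show "wfv (ar E) m M" "wfv (ar E) m N" using wf_mono by blast+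
  fix vs :: "'s vl list" assume "length vs = m" "\<forall>V\<in>set vs. V \<in> V0"
  moreover then have "\<forall>V\<in>set (take n vs). V \<in> V0" by (meson in_set_takeD)
  ultimately show "(substsv vs M, substsv vs N) \<in> sV"
    using a take_agreev[of n M vs] take_agreev[of n N vs] by auto
qed

lemma inst_eq: assumes tc: "\<forall>i. t i \<in> V0" and l: "length vs = k" and w: "wft (ar E) (k + n) P"
  shows "substs vs (instt k t P) = substs (vs @ map t [0..<n]) P"
proof -
  have tc': "\<forall>i. wfv (ar E) 0 (t i)" using tc by (simp add: cvals_def)
  have "substs vs (instt k t P) = instt 0 (\<lambda>i. if i < k then vs ! i else t (i - k)) P"
    unfolding substs_def using inst_comp(1)[OF tc', of 0 "\<lambda>i. vs ! i" k P] by simp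
  also have "\<dots> = instt 0 (\<lambda>i. (vs @ map t [0..<n]) ! i) P"
    by (rule inst_agree(1)[OF w]) (use l in \<open>auto simp: nth_append\<close>)
  finally show ?thesis unfolding substs_def .
qed

lemma inst_eqv: assumes tc: "\<forall>i. t i \<in> V0" and l: "length vs = k" and w: "wfv (ar E) (k + n) P"
  shows "substsv vs (instv k t P) = substsv (vs @ map t [0..<n]) P"
proof -
  have tc': "\<forall>i. wfv (ar E) 0 (t i)" using tc by (simp add: cvals_def)
  have "substsv vs (instv k t P) = instv 0 (\<lambda>i. if i < k then vs ! i else t (i - k)) P"
    unfolding substsv_def using inst_comp(2)[OF tc', of 0 "\<lambda>i. vs ! i" k P] by simp
  also have "\<dots> = instv 0 (\<lambda>i. (vs @ map t [0..<n]) ! i) P"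
    by (rule inst_agree(2)[OF w]) (use l in \<open>auto simp: nth_append\<close>)
  finally show ?thesis unfolding substsv_def .
qed

lemma OT_inst: assumes "(k + n, M, N) \<in> OT" and tc: "\<forall>i. t i \<in> V0"
  shows "(k, instt k t M, instt k t N) \<in> OT"
proof -
  from assms(1) have w: "wft (ar E) (k + n) M" "wft (ar E) (k + n) N"
    and h: "\<forall>vs. length vs = k + n \<longrightarrow> (\<forall>V\<in>set vs. V \<in> V0) \<longrightarrow> (substs vs M, substs vs N) \<in> sT"
    unfolding openT_iff by auto
  have tc': "\<forall>i<n. wfv (ar E) 0 (t i)" using tc by (simp add: cvals_def)
  show ?thesis unfolding openT_iff
  proof (intro conjI allI impI)
    show "wft (ar E) k (instt k t M)" "wft (ar E) k (instt k t N)" using inst_wf(1) w tc' by blast+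
    fix vs :: "'s vl list" assume "length vs = k" "\<forall>V\<in>set vs. V \<in> V0"
    then show "(substs vs (instt k t M), substs vs (instt k t N)) \<in> sT"
      using inst_eq[OF tc _ w(1)] inst_eq[OF tc _ w(2)] h[rule_format, of "vs @ map t [0..<n]"] tc by auto
  qed
qed

lemma OV_inst: assumes "(k + n, M, N) \<in> OV" and tc: "\<forall>i. t i \<in> V0"
  shows "(k, instv k t M, instv k t N) \<in> OV"
proof -
  from assms(1) have w: "wfv (ar E) (k + n) M" "wfv (ar E) (k + n) N"
    and h: "\<forall>vs. length vs = k + n \<longrightarrow> (\<forall>V\<in>set vs. V \<in> V0) \<longrightarrow> (substsv vs M, substsv vs N) \<in> sV"
    unfolding openV_iff by auto
  have tc': "\<forall>i<n. wfv (ar E) 0 (t i)" using tc by (simp add: cvals_def)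
  show ?thesis unfolding openV_iff
  proof (intro conjI allI impI)
    show "wfv (ar E) k (instv k t M)" "wfv (ar E) k (instv k t N)" using inst_wf(2) w tc' by blast+
    fix vs :: "'s vl list" assume "length vs = k" "\<forall>V\<in>set vs. V \<in> V0"
    then show "(substsv vs (instv k t M), substsv vs (instv k t N)) \<in> sV"
      using inst_eqv[OF tc _ w(1)] inst_eqv[OF tc _ w(2)] h[rule_format, of "vs @ map t [0..<n]"] tc by auto
  qed
qed

end


context howe begin

inductive HT :: "nat \<Rightarrow> 's trm \<Rightarrow> 's trm \<Rightarrow> bool" and HV :: "nat \<Rightarrow> 's vl \<Rightarrow> 's vl \<Rightarrow> bool" where
  HVar: "i < n \<Longrightarrow> (n, Var i, W) \<in> OV \<Longrightarrow> HV n (Var i) W"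
| HLam: "HT (Suc n) M M' \<Longrightarrow> (n, Lam M', W) \<in> OV \<Longrightarrow> HV n (Lam M) W"
| HRet: "HV n V V' \<Longrightarrow> (n, Ret V', N) \<in> OT \<Longrightarrow> HT n (Ret V) N"
| HApp: "HV n V V' \<Longrightarrow> HV n W W' \<Longrightarrow> (n, App V' W', N) \<in> OT \<Longrightarrow> HT n (App V W) N"
| HTo: "HT n M M' \<Longrightarrow> HT (Suc n) N N' \<Longrightarrow> (n, To M' N', P) \<in> OT \<Longrightarrow> HT n (To M N) P"
| HOp: "length Ms = ar E s \<Longrightarrow> length Ns = ar E s \<Longrightarrow> (\<forall>i<ar E s. HT n (Ms ! i) (Ns ! i))
          \<Longrightarrow> (n, Op s Ns, P) \<in> OT \<Longrightarrow> HT n (Op s Ms) P"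

lemma H_wf:
  "HT n M N \<Longrightarrow> wft (ar E) n M \<and> wft (ar E) n N"
  "HV n V W \<Longrightarrow> wfv (ar E) n V \<and> wfv (ar E) n W"
proof (induction rule: HT_HV.inducts)
  case (HOp Ms s Ns n P)
  then show ?case using OT_wf by (auto simp: in_set_conv_nth)
qed (auto dest: OT_wf OV_wf)

lemma H_O:
  "HT n M N \<Longrightarrow> (n, N, P) \<in> OT \<Longrightarrow> HT n M P"
  "HV n V W \<Longrightarrow> (n, W, U) \<in> OV \<Longrightarrow> HV n V U"
proof -
  show "HT n M N \<Longrightarrow> (n, N, P) \<in> OT \<Longrightarrow> HT n M P"
  proof (erule HT.cases)
    fix na V V' Na assume "n = na" "M = Ret V" "N = Na" "HV na V V'" "(na, Ret V', Na) \<in> OT" "(n, N, P) \<in> OT"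
    then show "HT n M P" using HRet OT_trans by metis
  next
    fix na V V' W W' Na assume "n = na" "M = App V W" "N = Na" "HV na V V'" "HV na W W'" "(na, App V' W', Na) \<in> OT" "(n, N, P) \<in> OT"
    then show "HT n M P" using HApp OT_trans by metis
  next
    fix na M1 M' N1 N' Pa assume "n = na" "M = To M1 N1" "N = Pa" "HT na M1 M'" "HT (Suc na) N1 N'" "(na, To M' N', Pa) \<in> OT" "(n, N, P) \<in> OT"
    then show "HT n M P" using HTo OT_trans by metis
  next
    fix Ms s Ns na Pa assume "n = na" "M = Op s Ms" "N = Pa" "length Ms = ar E s" "length Ns = ar E s"
      "\<forall>i<ar E s. HT na (Ms ! i) (Ns ! i)" "(na, Op s Ns, Pa) \<in> OT" "(n, N, P) \<in> OT"
    then show "HT n M P" using HOp OT_trans by metis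
  qed
  show "HV n V W \<Longrightarrow> (n, W, U) \<in> OV \<Longrightarrow> HV n V U"
  proof (erule HV.cases)
    fix i na Wa assume "n = na" "V = Var i" "W = Wa" "i < na" "(na, Var i, Wa) \<in> OV" "(n, W, U) \<in> OV"
    then show "HV n V U" using HVar OV_trans by metis
  next
    fix na M M' Wa assume "n = na" "V = Lam M" "W = Wa" "HT (Suc na) M M'" "(na, Lam M', Wa) \<in> OV" "(n, W, U) \<in> OV"
    then show "HV n V U" using HLam OV_trans by metis
  qed
qed

lemma H_refl:
  "wft (ar E) n M \<Longrightarrow> HT n M M"
  "wfv (ar E) n V \<Longrightarrow> HV n V V"
proof (induction M and V arbitrary: n and n)
  case (Ret x)
  then show ?case by (intro HRet[of n x x] OT_refl) auto
next
  case (App x1 x2)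
  then show ?case by (intro HApp[of n x1 x1 x2 x2] OT_refl) auto
next
  case (To x1 x2)
  then show ?case by (intro HTo[of n x1 x1 x2 x2] OT_refl) auto
next
  case (Op x1 x2)
  then show ?case by (intro HOp[of x2 x1 x2] OT_refl) auto
next
  case (Var x)
  then show ?case by (intro HVar OV_refl) auto
next
  case (Lam x)
  then show ?case by (intro HLam[of n x x] OV_refl) auto
qed

lemma OT_H: "(n, M, N) \<in> OT \<Longrightarrow> HT n M N"
  using H_refl(1) H_O(1) OT_wf by blast
lemma OV_H: "(n, M, N) \<in> OV \<Longrightarrow> HV n M N"
  using H_refl(2) H_O(2) OV_wf by blast

lemma H_weak:
  "HT n M N \<Longrightarrow> n \<le> m \<Longrightarrow> HT m M N"
  "HV n V W \<Longrightarrow> n \<le> m \<Longrightarrow> HV m V W"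
proof (induction arbitrary: m and m rule: HT_HV.inducts)
  case (HVar i n W)
  then show ?case by (intro HT_HV.intros(1)) (auto intro: OV_weak)
next
  case (HLam n M M' W)
  then show ?case by (intro HT_HV.intros(2)[of m M M']) (auto intro: OV_weak)
next
  case (HRet n V V' N)
  then show ?case by (intro HT_HV.intros(3)[of m V V']) (auto intro: OT_weak)
next
  case (HApp n V V' W W' N)
  then show ?case by (intro HT_HV.intros(4)[of m V V' W W']) (auto intro: OT_weak)
next
  case (HTo n M M' N N' P)
  then show ?case by (intro HT_HV.intros(5)[of m M M' N N']) (auto intro: OT_weak)
next
  case (HOp Ms s Ns n P)
  then show ?case by (intro HT_HV.intros(6)[of Ms s Ns m]) (auto intro: OT_weak)
qed

lemma H_subst:
  "HT N0 M M' \<Longrightarrow> N0 = k + n \<Longrightarrow> (\<forall>j<n. HV 0 (s j) (t j)) \<Longrightarrow> (\<forall>j. t j \<in> V0) \<Longrightarrow>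
     HT k (instt k s M) (instt k t M')"
  "HV N0 V V' \<Longrightarrow> N0 = k + n \<Longrightarrow> (\<forall>j<n. HV 0 (s j) (t j)) \<Longrightarrow> (\<forall>j. t j \<in> V0) \<Longrightarrow>
     HV k (instv k s V) (instv k t V')"
proof (induction arbitrary: k and k rule: HT_HV.inducts)
  case (HVar i N0 W)
  have o: "(k, instv k t (Var i), instv k t W) \<in> OV" using OV_inst HVar by blast
  show ?case
  proof (cases "i < k")
    case True
    then show ?thesis using o by (auto intro: HT_HV.intros)
  next
    case False
    then have j: "i - k < n" using HVar by auto
    have "HV k (s (i - k)) (t (i - k))" using HVar.prems(2) j H_weak(2) by blast
    then show ?thesis using o False H_O(2) by auto
  qed
next
  case (HLam N0 M M' W)
  have "HT (Suc k) (instt (Suc k) s M) (instt (Suc k) t M')" using HLam by auto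
  moreover have "(k, instv k t (Lam M'), instv k t W) \<in> OV" using OV_inst HLam by blast
  ultimately show ?case by (auto intro: HT_HV.intros)
next
  case (HRet N0 V V' N)
  have "(k, instt k t (Ret V'), instt k t N) \<in> OT" using OT_inst HRet by blast
  then show ?case using HRet by (auto intro: HT_HV.intros)
next
  case (HApp N0 V V' W W' N)
  have "(k, instt k t (App V' W'), instt k t N) \<in> OT" using OT_inst HApp by blast
  then show ?case using HApp by (auto intro: HT_HV.intros)
next
  case (HTo N0 M M' N N' P)
  have "HT (Suc k) (instt (Suc k) s N) (instt (Suc k) t N')" using HTo by auto
  moreover have "(k, instt k t (To M' N'), instt k t P) \<in> OT" using OT_inst HTo by blast
  ultimately show ?case using HTo by (auto intro: HT_HV.intros)
next
  case (HOp Ms sy Ns N0 P)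
  have "(k, instt k t (Op sy Ns), instt k t P) \<in> OT" using OT_inst HOp by blast
  moreover have "\<forall>i<ar E sy. HT k (map (instt k s) Ms ! i) (map (instt k t) Ns ! i)" using HOp by auto
  ultimately show ?case unfolding instt.simps
    by (intro HT_HV.intros(6)[of "map (instt k s) Ms" sy "map (instt k t) Ns" k]) (use HOp in auto)
qed

lemma H_compat:
  "i < n \<Longrightarrow> HV n (Var i) (Var i)"
  "HT (Suc n) M N \<Longrightarrow> HV n (Lam M) (Lam N)"
  "HV n V W \<Longrightarrow> HT n (Ret V) (Ret W)"
  "HV n V V' \<Longrightarrow> HV n W W' \<Longrightarrow> HT n (App V W) (App V' W')"
  "HT n M M' \<Longrightarrow> HT (Suc n) N N' \<Longrightarrow> HT n (To M N) (To M' N')"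
  "length Ms = ar E s \<Longrightarrow> length Ns = ar E s \<Longrightarrow> (\<forall>i<ar E s. HT n (Ms ! i) (Ns ! i)) \<Longrightarrow> HT n (Op s Ms) (Op s Ns)"
       apply (simp add: H_refl)
      apply (rule HLam, assumption, rule OV_refl, use H_wf in auto)
     apply (rule HRet, assumption, rule OT_refl, use H_wf in auto)
    apply (rule HApp, assumption, assumption, rule OT_refl, use H_wf in auto)
   apply (rule HTo, assumption, assumption, rule OT_refl, use H_wf in auto)
proof -
  assume a: "length Ms = ar E s" "length Ns = ar E s" "\<forall>i<ar E s. HT n (Ms ! i) (Ns ! i)"
  have "\<forall>x\<in>set Ns. wft (ar E) n x"
  proof
    fix x assume "x \<in> set Ns"
    then obtain i where "i < ar E s" "x = Ns ! i" using a(2) by (auto simp: in_set_conv_nth)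
    then show "wft (ar E) n x" using a(3) H_wf(1) by blast
  qed
  then have "wft (ar E) n (Op s Ns)" using a by simp
  then show "HT n (Op s Ms) (Op s Ns)" using a by (intro HOp[of Ms s Ns] OT_refl)
qed

end


context howe begin

abbreviation "HV0 \<equiv> {(V, W). HV 0 V W}"

lemma HV0_sub: "HV0 \<subseteq> V0 \<times> V0" using H_wf(2) by (auto simp: cvals_def)
lemma HV0_sV: "HV0 O sV \<subseteq> HV0" using sV_OV0 H_O(2) by blast
lemma compose: "(x, y) \<in> \<Gamma> HV0 \<Longrightarrow> (y, z) \<in> \<Gamma> sV \<Longrightarrow> (x, z) \<in> \<Gamma> HV0"
  using rel_comp[OF HV0_sub sV_sub] rel_mono[OF HV0_sV HV0_sub] by blast
lemma compose_sem: "(x, sem E P) \<in> \<Gamma> HV0 \<Longrightarrow> (P, N) \<in> sT \<Longrightarrow> (x, sem E N) \<in> \<Gamma> HV0"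
  using compose sT_sem by blast

lemma main_approx: "HT 0 M N \<Longrightarrow> (approx E n M, sem E N) \<in> \<Gamma> HV0"
proof (induction n arbitrary: M N)
  case 0
  then show ?case by (simp add: ind_bot[OF HV0_sub])
next
  case (Suc n)
  from Suc.prems show ?case
  proof (cases rule: HT.cases)
    case (HRet V V')
    have "(eta E V, eta E V') \<in> \<Gamma> HV0" using HRet by (intro rel_eta HV0_sub) auto
    then have "(eta E V, sem E (Ret V')) \<in> \<Gamma> HV0" by (simp add: sem_Ret)
    moreover have "(Ret V', N) \<in> sT" using HRet OT0 by auto
    ultimately show ?thesis using HRet compose_sem by auto
  next
    case (HApp V V' W W')
    show ?thesis
    proof (cases V)
      case (Var x)
      then show ?thesis using HApp by (simp add: ind_bot[OF HV0_sub])
    next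
      case (Lam M')
      from HApp(2)[unfolded Lam] obtain M3 where h1: "HT (Suc 0) M' M3" and h2: "(0, Lam M3, V') \<in> OV"
        by (cases rule: HV.cases) auto
      have wW': "W' \<in> V0" using H_wf(2)[OF HApp(3)] by (simp add: cvals_def)
      have "HT 0 (subst1 W M') (subst1 W' M3)"
        unfolding subst1_def using H_subst(1)[OF h1, of 0 1 "\<lambda>_. W" "\<lambda>_. W'"] HApp(3) wW' by auto
      then have ih: "(approx E n (subst1 W M'), sem E (subst1 W' M3)) \<in> \<Gamma> HV0" by (rule Suc.IH)
      have "(App (Lam M3) W', App V' W') \<in> sT" using OV0[OF h2] wW' by (rule sV_app)
      moreover have "(App V' W', N) \<in> sT" using HApp OT0 by auto
      ultimately have "(App (Lam M3) W', N) \<in> sT" by (rule sT_trans)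
      moreover have "(approx E n (subst1 W M'), sem E (App (Lam M3) W')) \<in> \<Gamma> HV0"
        using ih by (simp add: sem_App)
      ultimately show ?thesis using compose_sem HApp Lam by auto
    qed
  next
    case (HTo M1 M1' N1 N1')
    have ih1: "(approx E n M1, sem E M1') \<in> \<Gamma> HV0" using Suc.IH HTo by auto
    have ih2: "(approx E n (subst1 x N1), sem E (subst1 y N1')) \<in> \<Gamma> HV0" if xy: "(x, y) \<in> HV0" for x y
    proof -
      have "y \<in> V0" using xy HV0_sub by blast
      then have "HT 0 (subst1 x N1) (subst1 y N1')"
        unfolding subst1_def using H_subst(1)[OF HTo(3), of 0 1 "\<lambda>_. x" "\<lambda>_. y"] xy by auto
      then show ?thesis by (rule Suc.IH)
    qed
    have b: "(bnd E (approx E n M1) (\<lambda>V. approx E n (subst1 V N1)),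
           bnd E (sem E M1') (\<lambda>V. sem E (subst1 V N1'))) \<in> \<Gamma> HV0"
      by (rule rel_bind[OF HV0_sub HV0_sub ih2 ih1])
    have eq: "sem E (To M1' N1') = bnd E (sem E M1') (\<lambda>V. sem E (subst1 V N1'))"
      using H_wf(1)[OF HTo(2)] H_wf(1)[OF HTo(3)] by (intro sem_To) auto
    have c: "(bnd E (approx E n M1) (\<lambda>V. approx E n (subst1 V N1)), sem E (To M1' N1')) \<in> \<Gamma> HV0"
      using b eq by simp
    have st: "(To M1' N1', N) \<in> sT" using HTo OT0 by auto
    show ?thesis using compose_sem[OF c st] HTo by simp
  next
    case (HOp Ms s Ns)
    have "list_all2 (\<lambda>u v. (u, v) \<in> \<Gamma> HV0) (map (approx E n) Ms) (map (sem E) Ns)"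
      using HOp Suc.IH by (auto simp: list_all2_conv_all_nth)
    then have b: "(opr E s (map (approx E n) Ms), opr E s (map (sem E) Ns)) \<in> \<Gamma> HV0"
      using HOp by (intro rs HV0_sub) auto
    have "\<forall>x\<in>set Ns. wfc x"
    proof
      fix x assume "x \<in> set Ns"
      then obtain i where "i < ar E s" "x = Ns ! i" using HOp by (auto simp: in_set_conv_nth)
      then show "wfc x" using HOp H_wf(1) by blast
    qed
    then have eq: "sem E (Op s Ns) = opr E s (map (sem E) Ns)" using HOp by (intro sem_Op) auto
    have c: "(opr E s (map (approx E n) Ms), sem E (Op s Ns)) \<in> \<Gamma> HV0" using b eq by simp
    have st: "(Op s Ns, N) \<in> sT" using HOp OT0 by auto
    show ?thesis using compose_sem[OF c st] HOp by simp
  qed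
qed

lemma H_sem: "HT 0 M N \<Longrightarrow> (sem E M, sem E N) \<in> \<Gamma> HV0"
proof -
  assume h: "HT 0 M N"
  have "(lub lee (range (\<lambda>n. approx E n M)), sem E N) \<in> \<Gamma> HV0"
    by (rule ind_lub[OF HV0_sub approx_chain]) (use h H_wf main_approx in auto)
  then show ?thesis by (simp add: sem_def)
qed

lemma H_sim: "app_sim E \<Gamma> {(M, N). HT 0 M N} HV0"
  unfolding app_sim_def
proof (intro conjI allI impI)
  show "{(M, N). HT 0 M N} \<subseteq> {M. wfc M} \<times> {M. wfc M}" using H_wf(1) by auto
  show "HV0 \<subseteq> V0 \<times> V0" by (rule HV0_sub)
  show "(sem E M, sem E N) \<in> \<Gamma> HV0" if "(M, N) \<in> {(M, N). HT 0 M N}" for M N using that H_sem by auto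
  fix V W U assume "(V, W) \<in> HV0" "U \<in> V0"
  then show "(App V U, App W U) \<in> {(M, N). HT 0 M N}"
    using H_compat(4) H_refl(2) by (auto simp: cvals_def)
qed

lemma H_closedT: "HT 0 M N \<Longrightarrow> (M, N) \<in> sT" using sim_le[OF H_sim] by blast
lemma H_closedV: "HV 0 M N \<Longrightarrow> (M, N) \<in> sV" using sim_le[OF H_sim] by blast

definition "pad vs = (\<lambda>i. if i < length vs then vs ! i else Lam (Ret (Var 0)))"

lemma pad_closed: "\<forall>V\<in>set vs. V \<in> V0 \<Longrightarrow> \<forall>i. pad vs i \<in> V0"
  unfolding pad_def by (auto simp: cvals_def)

lemma H_OT: "HT n M N \<Longrightarrow> (n, M, N) \<in> OT"
  unfolding openT_iff
proof (intro conjI allI impI)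
  assume h: "HT n M N"
  then show w: "wft (ar E) n M" "wft (ar E) n N" using H_wf(1) by auto
  fix vs :: "'s vl list" assume l: "length vs = n" "\<forall>V\<in>set vs. V \<in> V0"
  have pc: "\<forall>i. pad vs i \<in> V0" using pad_closed l by blast
  have "HT 0 (instt 0 (pad vs) M) (instt 0 (pad vs) N)"
    using H_subst(1)[OF h, of 0 n "pad vs" "pad vs"] pc H_refl(2) by (auto simp: cvals_def)
  moreover have "substs vs M = instt 0 (pad vs) M" "substs vs N = instt 0 (pad vs) N"
    unfolding substs_def using l w by (auto intro!: inst_agree(1) simp: pad_def)
  ultimately show "(substs vs M, substs vs N) \<in> sT" using H_closedT by simp
qed

lemma H_OV: "HV n M N \<Longrightarrow> (n, M, N) \<in> OV"
  unfolding openV_iff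
proof (intro conjI allI impI)
  assume h: "HV n M N"
  then show w: "wfv (ar E) n M" "wfv (ar E) n N" using H_wf(2) by auto
  fix vs :: "'s vl list" assume l: "length vs = n" "\<forall>V\<in>set vs. V \<in> V0"
  have pc: "\<forall>i. pad vs i \<in> V0" using pad_closed l by blast
  have "HV 0 (instv 0 (pad vs) M) (instv 0 (pad vs) N)"
    using H_subst(2)[OF h, of 0 n "pad vs" "pad vs"] pc H_refl(2) by (auto simp: cvals_def)
  moreover have "substsv vs M = instv 0 (pad vs) M" "substsv vs N = instv 0 (pad vs) N"
    unfolding substsv_def using l w by (auto intro!: inst_agree(2) simp: pad_def)
  ultimately show "(substsv vs M, substsv vs N) \<in> sV" using H_closedV by simp
qed

lemma compat_O: "compatible (ar E) OT OV"
  unfolding compatible_def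
proof (intro conjI allI impI)
  fix n i :: nat assume "i < n" then show "(n, Var i, Var i) \<in> OV" using H_OV H_compat(1) by blast
next
  fix n M N assume "(Suc n, M, N) \<in> OT" then show "(n, Lam M, Lam N) \<in> OV" using H_OV H_compat(2) OT_H by blast
next
  fix n V W assume "(n, V, W) \<in> OV" then show "(n, Ret V, Ret W) \<in> OT" using H_OT H_compat(3) OV_H by blast
next
  fix n V V' W W' assume "(n, V, V') \<in> OV" "(n, W, W') \<in> OV"
  then show "(n, App V W, App V' W') \<in> OT" using H_OT H_compat(4) OV_H by blast
next
  fix n M M' N N' assume "(n, M, M') \<in> OT" "(Suc n, N, N') \<in> OT"
  then show "(n, To M N, To M' N') \<in> OT" using H_OT H_compat(5) OT_H by blast
next
  fix n s Ms Ns assume "length Ms = ar E s" "length Ns = ar E s" "\<forall>i<ar E s. (n, Ms ! i, Ns ! i) \<in> OT"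
  then show "(n, Op s Ms, Op s Ns) \<in> OT" using H_OT H_compat(6)[of Ms s Ns n] OT_H by blast
qed

lemma preorder_O: "preorder_rel (ar E) OT OV"
  unfolding preorder_rel_def using OT_refl OV_refl OT_trans OV_trans by blast

lemma lam_O: "lam_rel (ar E) OT OV"
  unfolding lam_rel_def using OT_wf OV_wf by auto

lemma preadeq_O: "preadequate E \<Gamma> OT"
  unfolding preadequate_def
proof (intro allI impI)
  fix M N assume "(0, M, N) \<in> OT"
  then have "(sem E M, sem E N) \<in> \<Gamma> sV" using OT0 sT_sem by blast
  then show "(sem E M, sem E N) \<in> \<Gamma> (V0 \<times> V0)" using rel_mono[OF sV_sub] by blast
qed

lemma final: "compatible (ar E) (openT (ar E) (simT E \<Gamma>)) (openV (ar E) (simV E \<Gamma>))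
       \<and> preorder_rel (ar E) (openT (ar E) (simT E \<Gamma>)) (openV (ar E) (simV E \<Gamma>))
       \<and> openT (ar E) (simT E \<Gamma>) \<subseteq> ctxT E \<Gamma>
       \<and> openV (ar E) (simV E \<Gamma>) \<subseteq> ctxV E \<Gamma>"
proof (intro conjI)
  show "compatible (ar E) OT OV" by (rule compat_O)
  show "preorder_rel (ar E) OT OV" by (rule preorder_O)
  show "OT \<subseteq> ctxT E \<Gamma>" unfolding ctxT_def using lam_O compat_O preadeq_O by blast
  show "OV \<subseteq> ctxV E \<Gamma>" unfolding ctxV_def using lam_O compat_O preadeq_O by blast
qed

end

theorem mainTheorem10:
  fixes E :: "('s, 't) effstr" and \<Gamma> :: "('s vl \<times> 's vl) set \<Rightarrow> ('t \<times> 't) set"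
  assumes "monad_laws E"
    and "continuous_sigma_algebra E"
    and "relator E \<Gamma>"
    and "inductive_relator E \<Gamma>"
    and "respects_sigma E \<Gamma>"
  shows "compatible (ar E) (openT (ar E) (simT E \<Gamma>)) (openV (ar E) (simV E \<Gamma>))
       \<and> preorder_rel (ar E) (openT (ar E) (simT E \<Gamma>)) (openV (ar E) (simV E \<Gamma>))
       \<and> openT (ar E) (simT E \<Gamma>) \<subseteq> ctxT E \<Gamma>
       \<and> openV (ar E) (simV E \<Gamma>) \<subseteq> ctxV E \<Gamma>"
proof -
  have "howe E \<Gamma>" using assms by (simp add: howe_def)
  then show ?thesis by (rule howe.final)
qed


end
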